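(* Let $M$ be a graded generalized Eulerian $A_n(K)$-module, $n\ge2$. Then $H_1(X_n;M)=\ker(X_n\colon M(-1)\to M)$ and $H_0(X_n;M)=M/X_nM$ are generalized Eulerian $A_{n-1}(K)$-modules.
   Context: $K$ is a field of characteristic zero; $A_n(K)=K\langle X_1,\dots,X_n,\partial_1,\dots,\partial_n\rangle$ graded by $\deg X_i=1$, $\deg\partial_i=-1$; $A_{n-1}(K)\subseteq A_n(K)$ is generated by $X_1,\dots,X_{n-1},\partial_1,\dots,\partial_{n-1}$ and acts on $H_1(X_n;M)$ and $H_0(X_n;M)$. $\mathcal E_m=\sum_{i=1}^mX_i\partial_i$; $|z|$ is the degree of homogeneous $z$. A graded $A_m(K)$-module $M$ is generalized Eulerian if for every homogeneous $z$ there is $a\ge1$ with $(\mathcal E_m-|z|)^az=0$. $M(l)_j=M_{j+l}$. *)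

theory Defs
  imports Main "HOL.Vector_Spaces"
begin

text \<open>A left A_n(K)-module is a K-vector space together with K-linear operators
  X i, D i (i = 1..n) satisfying the Weyl algebra relations (A_n(K) is presented
  by these generators and relations).\<close>
definition weyl_module ::
  "('k::field \<Rightarrow> 'm::ab_group_add \<Rightarrow> 'm) \<Rightarrow> nat \<Rightarrow> (nat \<Rightarrow> 'm \<Rightarrow> 'm) \<Rightarrow> (nat \<Rightarrow> 'm \<Rightarrow> 'm) \<Rightarrow> bool"
where "weyl_module scale n X D \<longleftrightarrow>
   vector_space scale \<and>
   (\<forall>i\<in>{1..n}. Vector_Spaces.linear scale scale (X i) \<and> Vector_Spaces.linear scale scale (D i)) \<and>
   (\<forall>i\<in>{1..n}. \<forall>j\<in>{1..n}. \<forall>v.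
       X i (X j v) = X j (X i v) \<and> D i (D j v) = D j (D i v) \<and>
       D i (X j v) - X j (D i v) = (if i = j then v else 0))"

definition graded_weyl_module ::
  "('k::field \<Rightarrow> 'm::ab_group_add \<Rightarrow> 'm) \<Rightarrow> nat \<Rightarrow> (nat \<Rightarrow> 'm \<Rightarrow> 'm) \<Rightarrow> (nat \<Rightarrow> 'm \<Rightarrow> 'm)
    \<Rightarrow> (int \<Rightarrow> 'm set) \<Rightarrow> bool"
where "graded_weyl_module scale n X D G \<longleftrightarrow>
   weyl_module scale n X D \<and>
   (\<forall>j. module.subspace scale (G j)) \<and>
   (\<forall>v. \<exists>!f::int \<Rightarrow> 'm. finite {j. f j \<noteq> 0} \<and> (\<forall>j. f j \<in> G j) \<and>
          v = (\<Sum>j\<in>{j. f j \<noteq> 0}. f j)) \<and>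
   (\<forall>i\<in>{1..n}. \<forall>j. X i ` G j \<subseteq> G (j + 1) \<and> D i ` G j \<subseteq> G (j - 1))"

definition euler :: "(nat \<Rightarrow> 'm \<Rightarrow> 'm) \<Rightarrow> (nat \<Rightarrow> 'm \<Rightarrow> 'm) \<Rightarrow> nat \<Rightarrow> 'm \<Rightarrow> 'm::ab_group_add"
  where "euler X D m v = (\<Sum>i=1..m. X i (D i v))"

definition shift :: "(int \<Rightarrow> 'm set) \<Rightarrow> int \<Rightarrow> int \<Rightarrow> 'm set"
  where "shift G l j = G (j + l)"

text \<open>Generalized Eulerian property for the graded A_m(K)-module with homogeneous
  components G j, taken modulo the (graded) submodule N: a homogeneous class of
  degree j is represented by z in G j, and the class is zero iff it lies in N.
  With N = {0} this is exactly the definition for the module itself.\<close>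
definition gen_eulerian ::
  "('k::field \<Rightarrow> 'm::ab_group_add \<Rightarrow> 'm) \<Rightarrow> nat \<Rightarrow> (nat \<Rightarrow> 'm \<Rightarrow> 'm) \<Rightarrow> (nat \<Rightarrow> 'm \<Rightarrow> 'm)
    \<Rightarrow> (int \<Rightarrow> 'm set) \<Rightarrow> 'm set \<Rightarrow> bool"
where "gen_eulerian scale m X D G N \<longleftrightarrow>
   (\<forall>j. \<forall>z\<in>G j. \<exists>a::nat. a \<ge> 1 \<and>
      ((\<lambda>v. euler X D m v - scale (of_int j) v) ^^ a) z \<in> N)"

end

theory Submission
  imports Defs
begin

lemma lin_facts:
  assumes "Vector_Spaces.linear s1 s2 f"
  shows "f (a+b) = f a + f b" "f (s1 c a) = s2 c (f a)" "f 0 = 0" "f (a - b) = f a - f b"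
        "f (sum g A) = (\<Sum>x\<in>A. f (g x))"
  using assms
  by (auto dest!: Vector_Spaces.linear.axioms(3) simp: module_hom.add module_hom.scale module_hom.zero module_hom.diff module_hom.sum)

lemma vs_facts:
  assumes "vector_space s"
  shows "s (a - b) x = s a x - s b x" "s 1 x = x" "s c (x+y) = s c x + s c y" "s c 0 = 0"
    "s c (x - y) = s c x - s c y"
  using module_iff_vector_space[of s] assms
  by (simp_all add: module.scale_left_diff_distrib module.scale_right_distrib module.scale_one
      module.scale_zero_right module.scale_right_diff_distrib)

theorem mainTheorem9:
  fixes scale :: "'k::field_char_0 \<Rightarrow> 'm::ab_group_add \<Rightarrow> 'm"
    and n :: nat
    and X D :: "nat \<Rightarrow> 'm \<Rightarrow> 'm"
    and G :: "int \<Rightarrow> 'm set"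
  assumes "n \<ge> 2"
    and "graded_weyl_module scale n X D G"
    and "gen_eulerian scale n X D G {0}"
  shows "gen_eulerian scale (n - 1) X D (\<lambda>j. shift G (-1) j \<inter> {z. X n z = 0}) {0} \<and>
         gen_eulerian scale (n - 1) X D G (range (X n))"
proof -
  have W: "weyl_module scale n X D" using assms(2) by (simp add: graded_weyl_module_def)
  have vs: "vector_space scale" using W by (simp add: weyl_module_def)
  have linX: "\<And>i. i \<in> {1..n} \<Longrightarrow> Vector_Spaces.linear scale scale (X i)"
    and linD: "\<And>i. i \<in> {1..n} \<Longrightarrow> Vector_Spaces.linear scale scale (D i)"
    using W by (auto simp: weyl_module_def)
  have rel: "\<And>i j v. i \<in> {1..n} \<Longrightarrow> j \<in> {1..n} \<Longrightarrow>
       X i (X j v) = X j (X i v) \<and> D i (D j v) = D j (D i v) \<and>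
       D i (X j v) - X j (D i v) = (if i = j then v else 0)"
    using W by (auto simp: weyl_module_def)
  have nn: "n \<in> {1..n}" using assms(1) by auto
  have XnX: "\<And>i v. i \<in> {1..n-1} \<Longrightarrow> X n (X i v) = X i (X n v)"
    using rel nn by auto
  have XnD: "\<And>i v. i \<in> {1..n-1} \<Longrightarrow> X n (D i v) = D i (X n v)"
  proof -
    fix i v assume i: "i \<in> {1..n-1}"
    hence "i \<in> {1..n}" "i \<noteq> n" by auto
    with rel[of i n v] nn show "X n (D i v) = D i (X n v)" by auto
  qed
  have DXn: "\<And>v. D n (X n v) - X n (D n v) = v" using rel[OF nn nn] by simp
  have Xn0: "X n 0 = 0" "D n 0 = 0" using lin_facts(3)[OF linX[OF nn]] lin_facts(3)[OF linD[OF nn]] by auto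
  have esplit: "\<And>v. euler X D n v = euler X D (n-1) v + X n (D n v)"
  proof -
    fix v
    obtain m where m: "n = Suc m" using assms(1) by (cases n) auto
    show "euler X D n v = euler X D (n-1) v + X n (D n v)"
      unfolding euler_def m by (simp add: sum.cl_ivl_Suc)
  qed
  have eadd: "\<And>a b. euler X D (n-1) (a+b) = euler X D (n-1) a + euler X D (n-1) b"
  proof -
    fix a b
    have "\<And>i. i \<in> {1..n-1} \<Longrightarrow> X i (D i (a+b)) = X i (D i a) + X i (D i b)"
    proof -
      fix i assume "i \<in> {1..n-1}" hence i: "i \<in> {1..n}" by auto
      show "X i (D i (a+b)) = X i (D i a) + X i (D i b)"
        using lin_facts(1)[OF linX[OF i]] lin_facts(1)[OF linD[OF i]] by simp
    qed
    thus "euler X D (n-1) (a+b) = euler X D (n-1) a + euler X D (n-1) b"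
      unfolding euler_def by (simp add: sum.distrib)
  qed
  have XnE: "\<And>w. X n (euler X D (n-1) w) = euler X D (n-1) (X n w)"
    unfolding euler_def lin_facts(5)[OF linX[OF nn]] using XnX XnD
    by (intro sum.cong) auto
  define L where "L j v = euler X D (n-1) v - scale (of_int j) v" for j :: int and v
  have XnL: "\<And>j w. X n (L j w) = L j (X n w)"
    unfolding L_def using lin_facts(4,2)[OF linX[OF nn]] XnE by simp
  have Ladd: "\<And>j a b. L j (a + b) = L j a + L j b"
    unfolding L_def using eadd vs_facts(3)[OF vs] by (simp add: algebra_simps)
  have L0: "\<And>j. L j 0 = 0" using Ladd[of _ 0 0] by simp
  have part1: "gen_eulerian scale (n - 1) X D (\<lambda>j. shift G (-1) j \<inter> {z. X n z = 0}) {0}"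
    unfolding gen_eulerian_def
  proof (intro allI ballI)
    fix j z assume z: "z \<in> shift G (- 1) j \<inter> {z. X n z = 0}"
    hence zG: "z \<in> G (j + -1)" and zk: "X n z = 0" by (auto simp: shift_def)
    define T where "T v = euler X D n v - scale (of_int (j + -1)) v" for v
    obtain a where a: "a \<ge> 1" "(T ^^ a) z = 0"
      using assms(3) zG unfolding gen_eulerian_def T_def by fastforce
    have TL: "T w = L j w" if "X n w = 0" for w
    proof -
      have "X n (D n w) = - w" using DXn[of w] that Xn0 by (simp add: algebra_simps) (metis minus_minus)
      moreover have "scale (of_int (j + -1)) w = scale (of_int j) w - w"
        using vs_facts(1,2)[OF vs] by simp
      ultimately show ?thesis unfolding T_def L_def esplit by (simp add: algebra_simps)
    qed
    have inv: "(T ^^ k) z = (L j ^^ k) z \<and> X n ((L j ^^ k) z) = 0" for k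
    proof (induction k)
      case 0 then show ?case using zk by simp
    next
      case (Suc k) then show ?case using TL XnL Xn0 L0 by simp
    qed
    show "\<exists>a\<ge>1. ((\<lambda>v. euler X D (n - 1) v - scale (of_int j) v) ^^ a) z \<in> {0}"
      using a inv[of a] unfolding L_def[abs_def] by auto
  qed
  have part2: "gen_eulerian scale (n - 1) X D G (range (X n))"
    unfolding gen_eulerian_def
  proof (intro allI ballI)
    fix j z assume zG: "z \<in> G j"
    define T where "T v = euler X D n v - scale (of_int j) v" for v
    obtain a where a: "a \<ge> 1" "(T ^^ a) z = 0"
      using assms(3) zG unfolding gen_eulerian_def T_def by fastforce
    have LT: "L j v = T v - X n (D n v)" for v
      unfolding L_def T_def esplit by (simp add: algebra_simps)
    have inv: "\<exists>w. (L j ^^ k) z = (T ^^ k) z + X n w" for k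
    proof (induction k)
      case 0 show ?case using Xn0 by (intro exI[of _ 0]) simp
    next
      case (Suc k)
      then obtain w where w: "(L j ^^ k) z = (T ^^ k) z + X n w" by blast
      have "(L j ^^ Suc k) z = L j ((T ^^ k) z) + X n (L j w)"
        using w Ladd XnL by simp
      also have "\<dots> = (T ^^ Suc k) z + X n (L j w - D n ((T ^^ k) z))"
      proof -
        have e1: "L j ((T ^^ k) z) = T ((T ^^ k) z) - X n (D n ((T ^^ k) z))" using LT by simp
        have e2: "X n (L j w - D n ((T ^^ k) z)) = X n (L j w) - X n (D n ((T ^^ k) z))"
          using lin_facts(4)[OF linX[OF nn]] by simp
        show ?thesis unfolding e1 e2 by (simp add: algebra_simps)
      qed
      finally show ?case by blast
    qed
    obtain w where "(L j ^^ a) z = X n w" using inv[of a] a by auto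
    then show "\<exists>a\<ge>1. ((\<lambda>v. euler X D (n - 1) v - scale (of_int j) v) ^^ a) z \<in> range (X n)"
      using a unfolding L_def[abs_def] by auto
  qed
  show ?thesis using part1 part2 by blast
qed

end
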